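(* Let $\gamma$ be a consistent family of grafts for a tree $\mathcal T$ and $\mathcal H=\mathrm{hybr}(\mathcal T,\gamma)$ (a tree). Then: (a) for each node $x$ of $\mathcal H$: $\mathrm{sons}_{\mathcal H}(x)=\mathrm{sons}_{\mathcal G}(x)$ if $x\in\{0_{\mathcal G}\}\cup\mathrm{impl}\,\mathcal G$ for some $\mathcal G\in\gamma$, and $\mathrm{sons}_{\mathcal H}(x)=\mathrm{sons}_{\mathcal T}(x)$ otherwise (i.e. when $x\in\mathrm{supp}(\mathcal T,\gamma)\setminus\{0_{\mathcal G}:\mathcal G\in\gamma\}$); (b) if $x\parallel_{\mathcal H}y$, then there are $x'\le_{\mathcal H}x$ and $y'\le_{\mathcal H}y$ such that either $x',y'\in\mathrm{supp}(\mathcal T,\gamma)$ and $x'\parallel_{\mathcal T}y'$, or for some $\mathcal G\in\gamma$, $x',y'\in\mathrm{nodes}\,\mathcal G$ and $x'\parallel_{\mathcal G}y'$; (c) if $\mathcal T$ has a least node, then $\mathcal H$ has a least node, $0_{\mathcal H}=0_{\mathcal T}$, and $0_{\mathcal H}\in\mathrm{supp}(\mathcal T,\gamma)$; (d) if $\max\mathcal T=\emptyset$ then $\max\mathcal H=\emptyset$; (e) if $\mathcal T$ and every $\mathcal G\in\gamma$ are $\kappa$-branching, then $\mathcal H$ is $\kappa$-branching; (f) if $\mathrm{height}\,\mathcal T\le\omega$ and $\mathrm{height}\,\mathcal G\le\omega$ for all $\mathcal G\in\gamma$, then $\mathrm{height}\,\mathcal H\le\omega$.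
   Context: A tree is a pair $\mathcal T=(Q,<_{\mathcal T})$ with $<_{\mathcal T}$ irreflexive transitive such that each set $\{v:v<_{\mathcal T}x\}$ is well-ordered; $x\parallel_{\mathcal T}y$ means $x,y$ incomparable; $\mathrm{sons}_{\mathcal T}(x)=\{s:x<_{\mathcal T}s$, no $v$ with $x<_{\mathcal T}v<_{\mathcal T}s\}$; $\max\mathcal T$ = maximal nodes; $0_{\mathcal T}$ = least node; $\kappa$-branching: every non-maximal node has exactly $\kappa$ sons; height of a node = order type of its predecessors, height of the tree = least $\beta$ such that no node has height $\beta$; $A{\downarrow}_{\mathcal T}=\{v:\exists a\in A\ a\le_{\mathcal T}v\}$; for an antichain $A$ and $x\in A{\downarrow}_{\mathcal T}$, $\mathrm{root}_{\mathcal T}(x,A)$ is the unique $r\in A$ with $r\le_{\mathcal T}x$. A graft for $\mathcal T$ is a tree $\mathcal G$ with more than one node, with a least node $0_{\mathcal G}\in\mathrm{nodes}\,\mathcal T$, such that $\max\mathcal G\subseteq\{v\in\mathrm{nodes}\,\mathcal T:v>_{\mathcal T}0_{\mathcal G}\}$, $\max\mathcal G$ is an antichain in $\mathcal T$, and $\mathrm{impl}\,\mathcal G:=\mathrm{nodes}\,\mathcal G\setminus(\{0_{\mathcal G}\}\cup\max\mathcal G)$ is disjoint from $\mathrm{nodes}\,\mathcal T$. $\mathrm{expl}(\mathcal T,\mathcal G)=\{v:v>_{\mathcal T}0_{\mathcal G}\}\setminus(\max\mathcal G){\downarrow}_{\mathcal T}$. $\gamma$ is a consistent family of grafts for $\mathcal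 T$ if its members are grafts for $\mathcal T$ with pairwise disjoint implants and for distinct $\mathcal D,\mathcal E\in\gamma$: $0_{\mathcal D}\parallel_{\mathcal T}0_{\mathcal E}$, or $0_{\mathcal D}\in(\max\mathcal E){\downarrow}_{\mathcal T}$, or $0_{\mathcal E}\in(\max\mathcal D){\downarrow}_{\mathcal T}$. $\mathrm{supp}(\mathcal T,\gamma)=\mathrm{nodes}\,\mathcal T\setminus\bigcup_{\mathcal G\in\gamma}\mathrm{expl}(\mathcal T,\mathcal G)$. $\mathrm{hybr}(\mathcal T,\gamma)=(H,<)$ with $H=\mathrm{supp}(\mathcal T,\gamma)\cup\bigcup_{\mathcal G\in\gamma}\mathrm{impl}\,\mathcal G$ and $x<y$ iff: (b1) $x,y\in\mathrm{supp}$, $x<_{\mathcal T}y$; or (b2) $x,y\in\mathrm{impl}\,\mathcal G$, $x<_{\mathcal G}y$ for some $\mathcal G\in\gamma$; or (b3) $x\in\mathrm{supp}$, $y\in\mathrm{impl}\,\mathcal G$, $x\le_{\mathcal T}0_{\mathcal G}$ for some $\mathcal G$; or (b4) $x\in\mathrm{impl}\,\mathcal G$, $y\in\mathrm{supp}\cap(\max\mathcal G){\downarrow}_{\mathcal T}$, $x<_{\mathcal G}\mathrm{root}_{\mathcal T}(y,\max\mathcal G)$ for some $\mathcal G$; or (b5) $x\in\mathrm{impl}\,\mathcal D$, $y\in\mathrm{impl}\,\mathcal E$, $0_{\mathcal E}\in(\max\mathcal D){\downarrow}_{\mathcal T}$, $x<_{\mathcal D}\mathrm{root}_{\mathcal T}(0_{\mathcal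 E},\max\mathcal D)$ for some distinct $\mathcal D,\mathcal E\in\gamma$. This $\mathrm{hybr}(\mathcal T,\gamma)$ is a tree. *)

theory Defs
  imports Main "HOL-Library.Equipollence"
begin

type_synonym 'a tree = "'a set \<times> 'a rel"

definition nodes :: "'a tree \<Rightarrow> 'a set" where "nodes T = fst T"
definition lt :: "'a tree \<Rightarrow> 'a \<Rightarrow> 'a \<Rightarrow> bool" where "lt T x y \<longleftrightarrow> (x, y) \<in> snd T"
definition le :: "'a tree \<Rightarrow> 'a \<Rightarrow> 'a \<Rightarrow> bool" where "le T x y \<longleftrightarrow> x = y \<or> lt T x y"

definition preds :: "'a tree \<Rightarrow> 'a \<Rightarrow> 'a set" where "preds T x = {v. lt T v x}"

definition is_tree :: "'a tree \<Rightarrow> bool" where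
  "is_tree T \<longleftrightarrow> snd T \<subseteq> nodes T \<times> nodes T
     \<and> (\<forall>x. \<not> lt T x x)
     \<and> (\<forall>x y z. lt T x y \<longrightarrow> lt T y z \<longrightarrow> lt T x z)
     \<and> (\<forall>x \<in> nodes T. (\<forall>u \<in> preds T x. \<forall>v \<in> preds T x. u = v \<or> lt T u v \<or> lt T v u)
                         \<and> wf (snd T \<inter> (preds T x \<times> preds T x)))"

definition par :: "'a tree \<Rightarrow> 'a \<Rightarrow> 'a \<Rightarrow> bool" where
  "par T x y \<longleftrightarrow> x \<in> nodes T \<and> y \<in> nodes T \<and> \<not> le T x y \<and> \<not> le T y x"

definition sons :: "'a tree \<Rightarrow> 'a \<Rightarrow> 'a set" where
  "sons T x = {s. lt T x s \<and> \<not> (\<exists>v. lt T x v \<and> lt T v s)}"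

definition maxnodes :: "'a tree \<Rightarrow> 'a set" where
  "maxnodes T = {x \<in> nodes T. \<not> (\<exists>y. lt T x y)}"

definition is_least :: "'a tree \<Rightarrow> 'a \<Rightarrow> bool" where
  "is_least T z \<longleftrightarrow> z \<in> nodes T \<and> (\<forall>v \<in> nodes T. le T z v)"

definition zero :: "'a tree \<Rightarrow> 'a" where "zero T = (THE z. is_least T z)"

text \<open>kappa-branching, with the cardinal kappa represented by a set K.\<close>
definition branching :: "'a tree \<Rightarrow> 'k set \<Rightarrow> bool" where
  "branching T K \<longleftrightarrow> (\<forall>x \<in> nodes T - maxnodes T. sons T x \<approx> K)"

text \<open>height of T is at most omega iff every node has height < omega,
  i.e. its (well-ordered) set of predecessors is finite.\<close>
definition height_le_omega :: "'a tree \<Rightarrow> bool" where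
  "height_le_omega T \<longleftrightarrow> (\<forall>x \<in> nodes T. finite (preds T x))"

definition antichain :: "'a tree \<Rightarrow> 'a set \<Rightarrow> bool" where
  "antichain T A \<longleftrightarrow> A \<subseteq> nodes T \<and> (\<forall>a \<in> A. \<forall>b \<in> A. a \<noteq> b \<longrightarrow> par T a b)"

definition down :: "'a tree \<Rightarrow> 'a set \<Rightarrow> 'a set" where
  "down T A = {v. \<exists>a \<in> A. le T a v}"

definition root :: "'a tree \<Rightarrow> 'a \<Rightarrow> 'a set \<Rightarrow> 'a" where
  "root T x A = (THE r. r \<in> A \<and> le T r x)"

definition impl :: "'a tree \<Rightarrow> 'a set" where
  "impl G = nodes G - ({zero G} \<union> maxnodes G)"

definition graft :: "'a tree \<Rightarrow> 'a tree \<Rightarrow> bool" where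
  "graft T G \<longleftrightarrow> is_tree G \<and> (\<exists>a \<in> nodes G. \<exists>b \<in> nodes G. a \<noteq> b)
     \<and> (\<exists>z. is_least G z) \<and> zero G \<in> nodes T
     \<and> maxnodes G \<subseteq> {v \<in> nodes T. lt T (zero G) v}
     \<and> antichain T (maxnodes G)
     \<and> impl G \<inter> nodes T = {}"

definition expl :: "'a tree \<Rightarrow> 'a tree \<Rightarrow> 'a set" where
  "expl T G = {v. lt T (zero G) v} - down T (maxnodes G)"

definition consistent :: "'a tree \<Rightarrow> 'a tree set \<Rightarrow> bool" where
  "consistent T \<gamma> \<longleftrightarrow> (\<forall>G \<in> \<gamma>. graft T G)
     \<and> (\<forall>D \<in> \<gamma>. \<forall>E \<in> \<gamma>. D \<noteq> E \<longrightarrow>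
          impl D \<inter> impl E = {}
          \<and> (par T (zero D) (zero E) \<or> zero D \<in> down T (maxnodes E) \<or> zero E \<in> down T (maxnodes D)))"

definition supp :: "'a tree \<Rightarrow> 'a tree set \<Rightarrow> 'a set" where
  "supp T \<gamma> = nodes T - (\<Union>G \<in> \<gamma>. expl T G)"

definition hybr :: "'a tree \<Rightarrow> 'a tree set \<Rightarrow> 'a tree" where
  "hybr T \<gamma> = (supp T \<gamma> \<union> (\<Union>G \<in> \<gamma>. impl G),
     {(x, y).
        (x \<in> supp T \<gamma> \<and> y \<in> supp T \<gamma> \<and> lt T x y)
      \<or> (\<exists>G \<in> \<gamma>. x \<in> impl G \<and> y \<in> impl G \<and> lt G x y)
      \<or> (\<exists>G \<in> \<gamma>. x \<in> supp T \<gamma> \<and> y \<in> impl G \<and> le T x (zero G))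
      \<or> (\<exists>G \<in> \<gamma>. x \<in> impl G \<and> y \<in> supp T \<gamma> \<and> y \<in> down T (maxnodes G)
                \<and> lt G x (root T y (maxnodes G)))
      \<or> (\<exists>D \<in> \<gamma>. \<exists>E \<in> \<gamma>. D \<noteq> E \<and> x \<in> impl D \<and> y \<in> impl E
                \<and> zero E \<in> down T (maxnodes D) \<and> lt D x (root T (zero E) (maxnodes D)))})"

end

theory Submission
  imports Defs
begin

lemma tree_nodes: "is_tree A \<Longrightarrow> lt A x y \<Longrightarrow> x \<in> nodes A \<and> y \<in> nodes A"
  unfolding is_tree_def lt_def nodes_def by auto

lemma tree_irr: "is_tree A \<Longrightarrow> \<not> lt A x x"
  unfolding is_tree_def by auto

lemma tree_trans: "is_tree A \<Longrightarrow> lt A x y \<Longrightarrow> lt A y z \<Longrightarrow> lt A x z"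
  unfolding is_tree_def by blast

lemma tree_asym: "is_tree A \<Longrightarrow> lt A x y \<Longrightarrow> \<not> lt A y x"
  using tree_irr tree_trans by metis

lemma tree_lin: "is_tree A \<Longrightarrow> lt A u x \<Longrightarrow> lt A v x \<Longrightarrow> u = v \<or> lt A u v \<or> lt A v u"
proof -
  assume t: "is_tree A" and a: "lt A u x" "lt A v x"
  then have "x \<in> nodes A" using tree_nodes by metis
  with t have "\<forall>u \<in> preds A x. \<forall>v \<in> preds A x. u = v \<or> lt A u v \<or> lt A v u"
    unfolding is_tree_def by blast
  with a show ?thesis unfolding preds_def by blast
qed

lemma tree_le_lin: "is_tree A \<Longrightarrow> le A u x \<Longrightarrow> le A v x \<Longrightarrow> u = v \<or> lt A u v \<or> lt A v u"
  unfolding le_def using tree_lin by metis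

lemma least_unique: "is_tree A \<Longrightarrow> is_least A z \<Longrightarrow> zero A = z"
  unfolding zero_def
proof (rule the_equality)
  assume "is_tree A" "is_least A z"
  then show "is_least A z" by simp
next
  fix z' assume t: "is_tree A" and a: "is_least A z" and b: "is_least A z'"
  then have "le A z z'" "le A z' z" unfolding is_least_def by auto
  then show "z' = z" using tree_asym[OF t] unfolding le_def by metis
qed

locale hyb =
  fixes T :: "'a tree" and \<gamma> :: "'a tree set"
  assumes tree: "is_tree T" and cons: "consistent T \<gamma>"
begin

abbreviation "S \<equiv> supp T \<gamma>"
abbreviation "H \<equiv> hybr T \<gamma>"

lemma graftG: "G \<in> \<gamma> \<Longrightarrow> graft T G"
  using cons unfolding consistent_def by blast

lemma G_tree: "G \<in> \<gamma> \<Longrightarrow> is_tree G"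
  using graftG unfolding graft_def by blast

lemma G_least: "G \<in> \<gamma> \<Longrightarrow> is_least G (zero G)"
proof -
  assume g: "G \<in> \<gamma>"
  then obtain z where "is_least G z" using graftG unfolding graft_def by blast
  with least_unique[OF G_tree[OF g]] show ?thesis by simp
qed

lemma G_zero_nodes: "G \<in> \<gamma> \<Longrightarrow> zero G \<in> nodes G"
  using G_least unfolding is_least_def by blast

lemma G_zero_le: "G \<in> \<gamma> \<Longrightarrow> v \<in> nodes G \<Longrightarrow> le G (zero G) v"
  using G_least unfolding is_least_def by blast

lemma G_not_lt_zero: "G \<in> \<gamma> \<Longrightarrow> \<not> lt G x (zero G)"
proof
  assume g: "G \<in> \<gamma>" and l: "lt G x (zero G)"
  then have "x \<in> nodes G" using tree_nodes G_tree by metis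
  then have "le G (zero G) x" using G_zero_le g by blast
  then show False using l tree_asym[OF G_tree[OF g]] tree_irr[OF G_tree[OF g]] unfolding le_def by metis
qed

lemma G_two: "G \<in> \<gamma> \<Longrightarrow> \<exists>a \<in> nodes G. \<exists>b \<in> nodes G. a \<noteq> b"
  using graftG unfolding graft_def by blast

lemma zero_T: "G \<in> \<gamma> \<Longrightarrow> zero G \<in> nodes T"
  using graftG unfolding graft_def by blast

lemma max_T: "G \<in> \<gamma> \<Longrightarrow> m \<in> maxnodes G \<Longrightarrow> m \<in> nodes T \<and> lt T (zero G) m"
  using graftG unfolding graft_def by blast

lemma anti: "G \<in> \<gamma> \<Longrightarrow> m \<in> maxnodes G \<Longrightarrow> m' \<in> maxnodes G \<Longrightarrow> le T m m' \<Longrightarrow> m = m'"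
  using graftG unfolding graft_def antichain_def par_def by blast

lemma impl_notT: "G \<in> \<gamma> \<Longrightarrow> x \<in> impl G \<Longrightarrow> x \<notin> nodes T"
  using graftG unfolding graft_def by blast

lemma max_G: "m \<in> maxnodes G \<Longrightarrow> m \<in> nodes G \<and> \<not> lt G m y"
  unfolding maxnodes_def by blast

lemma impl_iff: "x \<in> impl G \<longleftrightarrow> x \<in> nodes G \<and> x \<noteq> zero G \<and> x \<notin> maxnodes G"
  unfolding impl_def by blast

lemma nodesG: "x \<in> nodes G \<Longrightarrow> x = zero G \<or> x \<in> impl G \<or> x \<in> maxnodes G"
  unfolding impl_def by blast

lemma impl_unique: "D \<in> \<gamma> \<Longrightarrow> E \<in> \<gamma> \<Longrightarrow> x \<in> impl D \<Longrightarrow> x \<in> impl E \<Longrightarrow> D = E"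
  using cons unfolding consistent_def by blast

lemma consD: "D \<in> \<gamma> \<Longrightarrow> E \<in> \<gamma> \<Longrightarrow> D \<noteq> E \<Longrightarrow>
   par T (zero D) (zero E) \<or> zero D \<in> down T (maxnodes E) \<or> zero E \<in> down T (maxnodes D)"
  using cons unfolding consistent_def by blast

lemma S_T: "x \<in> S \<Longrightarrow> x \<in> nodes T"
  unfolding supp_def by blast

lemma impl_notS: "G \<in> \<gamma> \<Longrightarrow> x \<in> impl G \<Longrightarrow> x \<notin> S"
  using impl_notT S_T by blast

lemma S_iff: "x \<in> S \<longleftrightarrow> x \<in> nodes T \<and> (\<forall>G \<in> \<gamma>. lt T (zero G) x \<longrightarrow> x \<in> down T (maxnodes G))"
  unfolding supp_def expl_def by blast

lemma le_lt_trans: "le T a b \<Longrightarrow> lt T b c \<Longrightarrow> lt T a c"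
  unfolding le_def using tree_trans[OF tree] by blast

lemma lt_le_trans: "lt T a b \<Longrightarrow> le T b c \<Longrightarrow> lt T a c"
  unfolding le_def using tree_trans[OF tree] by blast

lemma T_irr: "\<not> lt T x x" using tree_irr[OF tree] .

lemma root_eq: "G \<in> \<gamma> \<Longrightarrow> m \<in> maxnodes G \<Longrightarrow> le T m v \<Longrightarrow> root T v (maxnodes G) = m"
  unfolding root_def
proof (rule the_equality)
  assume "G \<in> \<gamma>" "m \<in> maxnodes G" "le T m v"
  then show "m \<in> maxnodes G \<and> le T m v" by simp
next
  fix r assume g: "G \<in> \<gamma>" and m: "m \<in> maxnodes G" "le T m v" and r: "r \<in> maxnodes G \<and> le T r v"
  then have "r = m \<or> lt T r m \<or> lt T m r" using tree_le_lin[OF tree] by metis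
  then show "r = m" using anti[OF g] m r unfolding le_def by metis
qed

lemma down_root: "G \<in> \<gamma> \<Longrightarrow> v \<in> down T (maxnodes G) \<Longrightarrow>
   root T v (maxnodes G) \<in> maxnodes G \<and> le T (root T v (maxnodes G)) v"
  unfolding down_def using root_eq by fastforce

lemma zero_le_other: "D \<in> \<gamma> \<Longrightarrow> E \<in> \<gamma> \<Longrightarrow> D \<noteq> E \<Longrightarrow> le T (zero D) (zero E) \<Longrightarrow>
   zero E \<in> down T (maxnodes D)"
proof -
  assume d: "D \<in> \<gamma>" and e: "E \<in> \<gamma>" and ne: "D \<noteq> E" and l: "le T (zero D) (zero E)"
  have "\<not> par T (zero D) (zero E)" using l unfolding par_def by blast
  moreover have "zero D \<notin> down T (maxnodes E)"
  proof
    assume "zero D \<in> down T (maxnodes E)"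
    then obtain m where m: "m \<in> maxnodes E" "le T m (zero D)" unfolding down_def by blast
    then have "lt T (zero E) (zero D)" using max_T[OF e m(1)] lt_le_trans by blast
    then show False using l le_lt_trans T_irr by blast
  qed
  ultimately show ?thesis using consD[OF d e ne] by blast
qed

lemma zero_not_down: "G \<in> \<gamma> \<Longrightarrow> zero G \<notin> down T (maxnodes G)"
  unfolding down_def using max_T le_lt_trans T_irr by blast

lemma zero_inj: "D \<in> \<gamma> \<Longrightarrow> E \<in> \<gamma> \<Longrightarrow> zero D = zero E \<Longrightarrow> D = E"
  using zero_le_other zero_not_down unfolding le_def by metis

lemma zero_S: assumes g: "G \<in> \<gamma>" shows "zero G \<in> S"
proof -
  have "\<forall>E \<in> \<gamma>. lt T (zero E) (zero G) \<longrightarrow> zero G \<in> down T (maxnodes E)"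
  proof (intro ballI impI)
    fix E assume e: "E \<in> \<gamma>" and l: "lt T (zero E) (zero G)"
    then have "E \<noteq> G" using T_irr by blast
    then show "zero G \<in> down T (maxnodes E)" using zero_le_other[OF e g] l unfolding le_def by blast
  qed
  then show ?thesis unfolding S_iff using zero_T[OF g] by blast
qed

lemma max_S: assumes g: "G \<in> \<gamma>" and m: "m \<in> maxnodes G" shows "m \<in> S"
proof -
  have gm: "lt T (zero G) m" using max_T[OF g m] by blast
  have "\<forall>E \<in> \<gamma>. lt T (zero E) m \<longrightarrow> m \<in> down T (maxnodes E)"
  proof (intro ballI impI)
    fix E assume e: "E \<in> \<gamma>" and l: "lt T (zero E) m"
    show "m \<in> down T (maxnodes E)"
    proof (cases "E = G")
      case True then show ?thesis using m unfolding down_def le_def by blast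
    next
      case False
      have "zero E = zero G \<or> lt T (zero E) (zero G) \<or> lt T (zero G) (zero E)"
        using tree_lin[OF tree l gm] .
      then show ?thesis
      proof (elim disjE)
        assume "zero E = zero G" then show ?thesis using zero_inj[OF e g] False by blast
      next
        assume "lt T (zero E) (zero G)"
        then have "zero G \<in> down T (maxnodes E)" using zero_le_other[OF e g False] unfolding le_def by blast
        then obtain m' where m': "m' \<in> maxnodes E" "le T m' (zero G)" unfolding down_def by blast
        then have "lt T m' m" using gm le_lt_trans by blast
        then show ?thesis using m' unfolding down_def le_def by blast
      next
        assume a: "lt T (zero G) (zero E)"
        have "G \<noteq> E" using False by blast
        then have "zero E \<in> down T (maxnodes G)" using zero_le_other[OF g e] a unfolding le_def by blast
        then obtain m' where m': "m' \<in> maxnodes G" "le T m' (zero E)" unfolding down_def by blast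
        then have "lt T m' m" using l le_lt_trans by blast
        then have "m' = m" using anti[OF g m'(1) m] unfolding le_def by blast
        then show ?thesis using \<open>lt T m' m\<close> T_irr by blast
      qed
    qed
  qed
  then show ?thesis unfolding S_iff using max_T[OF g m] by blast
qed

lemma nodesH: "nodes H = S \<union> (\<Union>G \<in> \<gamma>. impl G)"
  unfolding hybr_def nodes_def by simp

lemma ltH: "lt H x y \<longleftrightarrow>
        (x \<in> S \<and> y \<in> S \<and> lt T x y)
      \<or> (\<exists>G \<in> \<gamma>. x \<in> impl G \<and> y \<in> impl G \<and> lt G x y)
      \<or> (\<exists>G \<in> \<gamma>. x \<in> S \<and> y \<in> impl G \<and> le T x (zero G))
      \<or> (\<exists>G \<in> \<gamma>. x \<in> impl G \<and> y \<in> S \<and> y \<in> down T (maxnodes G)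
                \<and> lt G x (root T y (maxnodes G)))
      \<or> (\<exists>D \<in> \<gamma>. \<exists>E \<in> \<gamma>. D \<noteq> E \<and> x \<in> impl D \<and> y \<in> impl E
                \<and> zero E \<in> down T (maxnodes D) \<and> lt D x (root T (zero E) (maxnodes D)))"
  unfolding hybr_def lt_def by simp

lemma ltH_SS: assumes "x \<in> S" "y \<in> S" shows "lt H x y \<longleftrightarrow> lt T x y"
proof
  have nx: "\<forall>G'\<in>\<gamma>. x \<notin> impl G'" "\<forall>G'\<in>\<gamma>. y \<notin> impl G'" using assms impl_notS by blast+
  assume "lt H x y" then show "lt T x y" unfolding ltH using nx by blast
next
  assume "lt T x y" then show "lt H x y" unfolding ltH using assms by blast
qed

lemma ltH_SI: assumes "x \<in> S" "G \<in> \<gamma>" "y \<in> impl G" shows "lt H x y \<longleftrightarrow> le T x (zero G)"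
proof
  have nx: "\<forall>G'\<in>\<gamma>. x \<notin> impl G'" "y \<notin> S" using assms impl_notS by blast+
  assume "lt H x y"
  then have "\<exists>G'\<in>\<gamma>. y \<in> impl G' \<and> le T x (zero G')" unfolding ltH using nx by blast
  then obtain G' where "G' \<in> \<gamma>" "y \<in> impl G'" "le T x (zero G')" by blast
  then show "le T x (zero G)" using impl_unique assms(2,3) by metis
next
  assume "le T x (zero G)" then show "lt H x y" unfolding ltH using assms by blast
qed

lemma ltH_IS: assumes "G \<in> \<gamma>" "x \<in> impl G" "y \<in> S" shows
   "lt H x y \<longleftrightarrow> (y \<in> down T (maxnodes G) \<and> lt G x (root T y (maxnodes G)))"
proof
  have nx: "\<forall>G'\<in>\<gamma>. y \<notin> impl G'" "x \<notin> S" using assms impl_notS by blast+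
  assume "lt H x y"
  then have "\<exists>G'\<in>\<gamma>. x \<in> impl G' \<and> y \<in> down T (maxnodes G') \<and> lt G' x (root T y (maxnodes G'))"
    unfolding ltH using nx by blast
  then obtain G' where "G' \<in> \<gamma>" "x \<in> impl G'" "y \<in> down T (maxnodes G') \<and> lt G' x (root T y (maxnodes G'))" by blast
  then show "y \<in> down T (maxnodes G) \<and> lt G x (root T y (maxnodes G))"
    using impl_unique assms(1,2) by metis
next
  assume "y \<in> down T (maxnodes G) \<and> lt G x (root T y (maxnodes G))"
  then show "lt H x y" unfolding ltH using assms by blast
qed

lemma ltH_II: assumes "G \<in> \<gamma>" "x \<in> impl G" "y \<in> impl G" shows "lt H x y \<longleftrightarrow> lt G x y"
proof
  have nx: "x \<notin> S" "y \<notin> S" using assms impl_notS by blast+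
  have u: "\<forall>G'\<in>\<gamma>. x \<in> impl G' \<longrightarrow> G' = G" using impl_unique assms by blast
  assume "lt H x y"
  then have "(\<exists>G'\<in>\<gamma>. x \<in> impl G' \<and> lt G' x y) \<or> (\<exists>D\<in>\<gamma>. \<exists>E\<in>\<gamma>. D \<noteq> E \<and> x \<in> impl D \<and> y \<in> impl E)"
    unfolding ltH using nx by blast
  moreover have "\<not> (\<exists>D\<in>\<gamma>. \<exists>E\<in>\<gamma>. D \<noteq> E \<and> x \<in> impl D \<and> y \<in> impl E)"
    using impl_unique assms by metis
  ultimately show "lt G x y" using u by blast
next
  assume "lt G x y" then show "lt H x y" unfolding ltH using assms by blast
qed

lemma ltH_IID: assumes "D \<in> \<gamma>" "E \<in> \<gamma>" "D \<noteq> E" "x \<in> impl D" "y \<in> impl E" shows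
   "lt H x y \<longleftrightarrow> (zero E \<in> down T (maxnodes D) \<and> lt D x (root T (zero E) (maxnodes D)))"
proof
  have nx: "x \<notin> S" "y \<notin> S" using assms impl_notS by blast+
  have u: "\<forall>G'\<in>\<gamma>. x \<in> impl G' \<longrightarrow> G' = D" "\<forall>G'\<in>\<gamma>. y \<in> impl G' \<longrightarrow> G' = E"
    using impl_unique assms by blast+
  assume "lt H x y"
  then have "(\<exists>G'\<in>\<gamma>. x \<in> impl G' \<and> y \<in> impl G') \<or> (\<exists>D'\<in>\<gamma>. \<exists>E'\<in>\<gamma>. x \<in> impl D' \<and> y \<in> impl E'
                \<and> zero E' \<in> down T (maxnodes D') \<and> lt D' x (root T (zero E') (maxnodes D')))"
    unfolding ltH using nx by blast
  moreover have "\<not> (\<exists>G'\<in>\<gamma>. x \<in> impl G' \<and> y \<in> impl G')" using u assms(3) by blast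
  ultimately obtain D' E' where "D' \<in> \<gamma>" "E' \<in> \<gamma>" "x \<in> impl D'" "y \<in> impl E'"
      "zero E' \<in> down T (maxnodes D') \<and> lt D' x (root T (zero E') (maxnodes D'))" by blast
  moreover then have "D' = D" "E' = E" using u by blast+
  ultimately show "zero E \<in> down T (maxnodes D) \<and> lt D x (root T (zero E) (maxnodes D))" by simp
next
  assume "zero E \<in> down T (maxnodes D) \<and> lt D x (root T (zero E) (maxnodes D))"
  then show "lt H x y" unfolding ltH using assms by blast
qed

lemma nodesH_cases: "x \<in> nodes H \<Longrightarrow> x \<in> S \<or> (\<exists>G \<in> \<gamma>. x \<in> impl G)"
  unfolding nodesH by blast


lemma ltH_nodes: "lt H x y \<Longrightarrow> (x \<in> S \<or> (\<exists>G \<in> \<gamma>. x \<in> impl G)) \<and> (y \<in> S \<or> (\<exists>G \<in> \<gamma>. y \<in> impl G))"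
  unfolding ltH by blast

lemma impl_nodes: "x \<in> impl G \<Longrightarrow> x \<in> nodes G"
  unfolding impl_def by blast

lemma fz: "G \<in> \<gamma> \<Longrightarrow> v \<in> nodes G \<Longrightarrow> v \<noteq> zero G \<Longrightarrow> lt G (zero G) v"
  using G_zero_le unfolding le_def by metis

lemma down_zero_lt: "G \<in> \<gamma> \<Longrightarrow> v \<in> down T (maxnodes G) \<Longrightarrow> lt T (zero G) v"
  unfolding down_def using max_T lt_le_trans by blast

lemma down_cross: assumes "G \<in> \<gamma>" "E \<in> \<gamma>" "zero E \<in> down T (maxnodes G)" "m \<in> maxnodes G"
  "m \<in> down T (maxnodes E)" shows False
proof -
  obtain m' where m': "m' \<in> maxnodes G" "le T m' (zero E)" using assms(3) unfolding down_def by blast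
  obtain mE where mE: "mE \<in> maxnodes E" "le T mE m" using assms(5) unfolding down_def by blast
  have "lt T (zero E) mE" using max_T[OF assms(2) mE(1)] by blast
  then have "lt T m' m" using m'(2) mE(2) le_lt_trans lt_le_trans by blast
  moreover then have "m' = m" using anti[OF assms(1) m'(1) assms(4)] unfolding le_def by blast
  ultimately show False using T_irr by blast
qed

lemma down_cross2: assumes "G \<in> \<gamma>" "E \<in> \<gamma>" "zero E \<in> down T (maxnodes G)" "zero G \<in> down T (maxnodes E)"
  shows False
proof -
  have "lt T (zero G) (zero E)" "lt T (zero E) (zero G)" using down_zero_lt assms by blast+
  then show False using tree_asym[OF tree] by blast
qed

lemma ltH_G: assumes g: "G \<in> \<gamma>" and x: "x \<in> nodes G" and y: "y \<in> nodes G"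
  shows "lt H x y \<longleftrightarrow> lt G x y"
proof -
  have zS: "zero G \<in> S" using zero_S[OF g] .
  have tG: "is_tree G" using G_tree[OF g] .
  have nz: "\<not> lt G v (zero G)" for v using G_not_lt_zero[OF g] .
  have nm: "m \<in> maxnodes G \<Longrightarrow> \<not> lt G m v" for m v by (simp add: max_G)
  from nodesG[OF x] show ?thesis
  proof (elim disjE)
    assume x0: "x = zero G"
    from nodesG[OF y] show ?thesis
    proof (elim disjE)
      assume y0: "y = zero G"
      have "\<not> lt H (zero G) (zero G)" using ltH_SS[OF zS zS] T_irr by blast
      moreover have "\<not> lt G (zero G) (zero G)" using tree_irr[OF tG] by blast
      ultimately show ?thesis using x0 y0 by blast
    next
      assume yi: "y \<in> impl G"
      then have "y \<noteq> zero G" by (simp add: impl_iff)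
      then have "lt G (zero G) y" using fz[OF g y] by blast
      moreover have "lt H (zero G) y" using ltH_SI[OF zS g yi] unfolding le_def by blast
      ultimately show ?thesis using x0 by blast
    next
      assume ym: "y \<in> maxnodes G"
      have "lt T (zero G) y" using max_T[OF g ym] by blast
      then have "y \<noteq> zero G" using T_irr by metis
      then have "lt G (zero G) y" using fz[OF g y] by blast
      moreover have "lt H (zero G) y" using ltH_SS[OF zS max_S[OF g ym]] max_T[OF g ym] by blast
      ultimately show ?thesis using x0 by blast
    qed
  next
    assume xi: "x \<in> impl G"
    from nodesG[OF y] show ?thesis
    proof (elim disjE)
      assume y0: "y = zero G"
      have "\<not> lt H x (zero G)" using ltH_IS[OF g xi zS] zero_not_down[OF g] by blast
      then show ?thesis using y0 nz by blast
    next
      assume yi: "y \<in> impl G" then show ?thesis using ltH_II[OF g xi yi] by blast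
    next
      assume ym: "y \<in> maxnodes G"
      have "y \<in> down T (maxnodes G)" using ym unfolding down_def le_def by blast
      moreover have "root T y (maxnodes G) = y" using root_eq[OF g ym] unfolding le_def by blast
      ultimately show ?thesis using ltH_IS[OF g xi max_S[OF g ym]] by presburger
    qed
  next
    assume xm: "x \<in> maxnodes G"
    have xS: "x \<in> S" using max_S[OF g xm] .
    have "\<not> lt G x y" using nm[OF xm] .
    moreover have "\<not> lt H x y"
    proof
      assume l: "lt H x y"
      from nodesG[OF y] show False
      proof (elim disjE)
        assume y0: "y = zero G"
        then have "lt T x (zero G)" using l ltH_SS[OF xS zS] by blast
        then show False using max_T[OF g xm] tree_asym[OF tree] by blast
      next
        assume yi: "y \<in> impl G" then have "le T x (zero G)" using l ltH_SI[OF xS g yi] by blast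
        then show False using max_T[OF g xm] le_lt_trans T_irr by blast
      next
        assume ym: "y \<in> maxnodes G" then have "lt T x y" using l ltH_SS[OF xS max_S[OF g ym]] by blast
        then show False using anti[OF g xm ym] T_irr unfolding le_def by blast
      qed
    qed
    ultimately show ?thesis by blast
  qed
qed

lemma escape: assumes g: "G \<in> \<gamma>" and x: "x = zero G \<or> x \<in> impl G" and l: "lt H x y"
  and y: "y \<notin> nodes G" shows "\<exists>s \<in> nodes G. lt H x s \<and> lt H s y"
proof -
  have zS: "zero G \<in> S" using zero_S[OF g] .
  have mG: "m \<in> maxnodes G \<Longrightarrow> m \<in> nodes G" for m by (simp add: max_G)
  have xm: "lt H x m" if m: "m \<in> maxnodes G" "lt G x (root T m (maxnodes G)) \<or> x = zero G" for m
  proof -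
    have r: "root T m (maxnodes G) = m" using root_eq[OF g m(1)] unfolding le_def by blast
    have "x \<in> nodes G" using x G_zero_nodes[OF g] impl_nodes[of x G] by auto
    moreover have "lt G x m"
    proof (cases "x = zero G")
      case True then show ?thesis using fz[OF g mG[OF m(1)]] max_T[OF g m(1)] T_irr by metis
    next
      case False then show ?thesis using m(2) r by simp
    qed
    ultimately show ?thesis using ltH_G[OF g _ mG[OF m(1)]] by blast
  qed
  from ltH_nodes[OF l] have "y \<in> S \<or> (\<exists>E \<in> \<gamma>. y \<in> impl E)" by blast
  then show ?thesis
  proof (elim disjE bexE)
    assume yS: "y \<in> S"
    have yd: "y \<in> down T (maxnodes G) \<and> (x \<in> impl G \<longrightarrow> lt G x (root T y (maxnodes G)))"
    proof (cases "x = zero G")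
      case True
      have xi: "x \<notin> impl G" using impl_notS[OF g] zS True by metis
      have "lt T (zero G) y" using True l ltH_SS[OF zS yS] by simp
      then have "y \<in> down T (maxnodes G)" using yS g unfolding S_iff by blast
      then show ?thesis using xi by blast
    next
      case False then have xi: "x \<in> impl G" using x by blast
      then show ?thesis using l ltH_IS[OF g xi yS] by simp
    qed
    then obtain m where m: "m \<in> maxnodes G" "le T m y" "root T y (maxnodes G) = m"
      using down_root[OF g] by blast
    have "m \<noteq> y" using mG[OF m(1)] y by blast
    then have "lt T m y" using m(2) unfolding le_def by blast
    then have mH: "lt H m y" using ltH_SS[OF max_S[OF g m(1)] yS] by simp
    have rm: "root T m (maxnodes G) = m" using root_eq[OF g m(1), of m] unfolding le_def by simp
    have "lt G x (root T m (maxnodes G)) \<or> x = zero G" using yd m(3) rm x by auto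
    then have "lt H x m" using xm[OF m(1)] by blast
    then show ?thesis using mG[OF m(1)] mH by blast
  next
    fix E assume e: "E \<in> \<gamma>" and yi: "y \<in> impl E"
    have ne: "G \<noteq> E" using y yi by (metis impl_nodes)
    have zd: "zero E \<in> down T (maxnodes G) \<and> (x \<in> impl G \<longrightarrow> lt G x (root T (zero E) (maxnodes G)))"
    proof (cases "x = zero G")
      case True
      have xi: "x \<notin> impl G" using impl_notS[OF g] zS True by metis
      have "le T (zero G) (zero E)" using True l ltH_SI[OF zS e yi] by simp
      then have "zero E \<in> down T (maxnodes G)" using zero_le_other[OF g e ne] by blast
      then show ?thesis using xi by blast
    next
      case False then have xi: "x \<in> impl G" using x by blast
      then show ?thesis using l ltH_IID[OF g e ne xi yi] by simp
    qed
    then obtain m where m: "m \<in> maxnodes G" "le T m (zero E)" "root T (zero E) (maxnodes G) = m"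
      using down_root[OF g] by blast
    have mH: "lt H m y" using ltH_SI[OF max_S[OF g m(1)] e yi] m(2) by simp
    have rm: "root T m (maxnodes G) = m" using root_eq[OF g m(1), of m] unfolding le_def by simp
    have "lt G x (root T m (maxnodes G)) \<or> x = zero G" using zd m(3) rm x by auto
    then have "lt H x m" using xm[OF m(1)] by blast
    then show ?thesis using mG[OF m(1)] mH by blast
  qed
qed


lemma no_between: assumes g: "G \<in> \<gamma>" and x: "x = zero G \<or> x \<in> impl G" and s: "s \<in> nodes G"
  and xs: "lt G x s" and l1: "lt H x v" and l2: "lt H v s" and v: "v \<notin> nodes G" shows False
proof -
  have zS: "zero G \<in> S" using zero_S[OF g] .
  have sz: "s \<noteq> zero G" using xs G_not_lt_zero[OF g] by metis
  then have sc: "s \<in> impl G \<or> s \<in> maxnodes G" using nodesG[OF s] by blast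
  from ltH_nodes[OF l1] have "v \<in> S \<or> (\<exists>E \<in> \<gamma>. v \<in> impl E)" by blast
  then show False
  proof (elim disjE bexE)
    assume vS: "v \<in> S"
    have "lt T (zero G) v \<and> (x \<in> impl G \<longrightarrow> v \<in> down T (maxnodes G))"
    proof (cases "x = zero G")
      case True
      have xi: "x \<notin> impl G" using impl_notS[OF g] zS True by metis
      have "lt T (zero G) v" using True l1 ltH_SS[OF zS vS] by simp
      then show ?thesis using xi by blast
    next
      case False then have xi: "x \<in> impl G" using x by blast
      then have "v \<in> down T (maxnodes G)" using l1 ltH_IS[OF g xi vS] by simp
      then show ?thesis using down_zero_lt[OF g] by blast
    qed
    then have zv: "lt T (zero G) v" and vd: "v \<in> down T (maxnodes G)" using vS g unfolding S_iff by blast+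
    from sc show False
    proof
      assume si: "s \<in> impl G"
      have "le T v (zero G)" using l2 ltH_SI[OF vS g si] by simp
      then show False using zv lt_le_trans T_irr by blast
    next
      assume sm: "s \<in> maxnodes G"
      have "lt T v s" using l2 ltH_SS[OF vS max_S[OF g sm]] by simp
      obtain m' where m': "m' \<in> maxnodes G" "le T m' v" using vd unfolding down_def by blast
      then have "lt T m' s" using \<open>lt T v s\<close> le_lt_trans by blast
      moreover then have "m' = s" using anti[OF g m'(1) sm] unfolding le_def by blast
      ultimately show False using T_irr by blast
    qed
  next
    fix E assume e: "E \<in> \<gamma>" and vi: "v \<in> impl E"
    have ne: "G \<noteq> E" using v vi by (metis impl_nodes)
    have zd: "zero E \<in> down T (maxnodes G)"
    proof (cases "x = zero G")
      case True
      have "le T (zero G) (zero E)" using True l1 ltH_SI[OF zS e vi] by simp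
      then show ?thesis using zero_le_other[OF g e ne] by blast
    next
      case False then have xi: "x \<in> impl G" using x by blast
      then show ?thesis using l1 ltH_IID[OF g e ne xi vi] by simp
    qed
    from sc show False
    proof
      assume si: "s \<in> impl G"
      have "zero G \<in> down T (maxnodes E)" using l2 ltH_IID[OF e g ne[symmetric] vi si] by simp
      then show False using down_cross2[OF g e zd] by blast
    next
      assume sm: "s \<in> maxnodes G"
      have "s \<in> down T (maxnodes E)" using l2 ltH_IS[OF e vi max_S[OF g sm]] by simp
      then show False using down_cross[OF g e zd sm] by blast
    qed
  qed
qed

lemma sons_G: assumes g: "G \<in> \<gamma>" and x: "x = zero G \<or> x \<in> impl G" shows "sons H x = sons G x"
proof -
  have xn: "x \<in> nodes G" using x G_zero_nodes[OF g] impl_nodes[of x G] by auto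
  have tG: "is_tree G" using G_tree[OF g] .
  show ?thesis
  proof (rule set_eqI, rule iffI)
    fix s assume "s \<in> sons H x"
    then have l: "lt H x s" and nb: "\<not> (\<exists>v. lt H x v \<and> lt H v s)" unfolding sons_def by blast+
    have sn: "s \<in> nodes G" using escape[OF g x l] nb by blast
    then have "lt G x s" using l ltH_G[OF g xn sn] by blast
    moreover have "\<not> (\<exists>v. lt G x v \<and> lt G v s)"
    proof
      assume "\<exists>v. lt G x v \<and> lt G v s"
      then obtain v where v: "lt G x v" "lt G v s" by blast
      then have vn: "v \<in> nodes G" using tree_nodes[OF tG] by blast
      then have "lt H x v" "lt H v s" using v ltH_G[OF g xn vn] ltH_G[OF g vn sn] by blast+
      then show False using nb by blast
    qed
    ultimately show "s \<in> sons G x" unfolding sons_def by blast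
  next
    fix s assume "s \<in> sons G x"
    then have l: "lt G x s" and nb: "\<not> (\<exists>v. lt G x v \<and> lt G v s)" unfolding sons_def by blast+
    have sn: "s \<in> nodes G" using l tree_nodes[OF tG] by blast
    have "lt H x s" using l ltH_G[OF g xn sn] by blast
    moreover have "\<not> (\<exists>v. lt H x v \<and> lt H v s)"
    proof
      assume "\<exists>v. lt H x v \<and> lt H v s"
      then obtain v where v: "lt H x v" "lt H v s" by blast
      show False
      proof (cases "v \<in> nodes G")
        case True
        then have "lt G x v" "lt G v s" using v ltH_G[OF g xn True] ltH_G[OF g True sn] by blast+
        then show False using nb by blast
      next
        case False then show False using no_between[OF g x sn l v(1) v(2)] by blast
      qed
    qed
    ultimately show "s \<in> sons H x" unfolding sons_def by blast
  qed
qed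

lemma between_S: assumes xS: "x \<in> S" and nz: "\<forall>G \<in> \<gamma>. x \<noteq> zero G" and sS: "s \<in> S"
  and l1: "lt T x v" and l2: "lt T v s" shows "\<exists>v' \<in> S. lt T x v' \<and> lt T v' s"
proof (cases "v \<in> S")
  case True then show ?thesis using l1 l2 by blast
next
  case False
  have "v \<in> nodes T" using tree_nodes[OF tree l1] by blast
  with False obtain G where g: "G \<in> \<gamma>" and zv: "lt T (zero G) v" and vd: "v \<notin> down T (maxnodes G)"
    unfolding S_iff by blast
  have "zero G = x \<or> lt T (zero G) x \<or> lt T x (zero G)" using tree_lin[OF tree zv l1] .
  then show ?thesis
  proof (elim disjE)
    assume "zero G = x" then show ?thesis using nz g by metis
  next
    assume "lt T (zero G) x"
    then have "x \<in> down T (maxnodes G)" using xS g unfolding S_iff by blast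
    then have "v \<in> down T (maxnodes G)" using l1 unfolding down_def le_def using tree_trans[OF tree] by blast
    then show ?thesis using vd by blast
  next
    assume "lt T x (zero G)"
    moreover have "lt T (zero G) s" using zv l2 tree_trans[OF tree] by blast
    ultimately show ?thesis using zero_S[OF g] by blast
  qed
qed

lemma sonsT_S: assumes xS: "x \<in> S" and nz: "\<forall>G \<in> \<gamma>. x \<noteq> zero G"
  and l: "lt T x s" and nb: "\<not> (\<exists>v. lt T x v \<and> lt T v s)" shows "s \<in> S"
proof -
  have "\<forall>G \<in> \<gamma>. lt T (zero G) s \<longrightarrow> s \<in> down T (maxnodes G)"
  proof (intro ballI impI)
    fix G assume g: "G \<in> \<gamma>" and zs: "lt T (zero G) s"
    have "zero G = x \<or> lt T (zero G) x \<or> lt T x (zero G)" using tree_lin[OF tree zs l] .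
    then show "s \<in> down T (maxnodes G)"
    proof (elim disjE)
      assume "zero G = x" then show ?thesis using nz g by metis
    next
      assume "lt T (zero G) x"
      then have "x \<in> down T (maxnodes G)" using xS g unfolding S_iff by blast
      then show ?thesis using l unfolding down_def le_def using tree_trans[OF tree] by blast
    next
      assume "lt T x (zero G)" then show ?thesis using zs nb by blast
    qed
  qed
  moreover have "s \<in> nodes T" using tree_nodes[OF tree l] by blast
  ultimately show ?thesis unfolding S_iff by blast
qed

lemma sons_T: assumes xS: "x \<in> S" and nz: "\<forall>G \<in> \<gamma>. x \<noteq> zero G" shows "sons H x = sons T x"
proof (rule set_eqI, rule iffI)
  fix s assume "s \<in> sons H x"
  then have l: "lt H x s" and nb: "\<not> (\<exists>v. lt H x v \<and> lt H v s)" unfolding sons_def by blast+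
  have sS: "s \<in> S"
  proof (rule ccontr)
    assume sn: "s \<notin> S"
    then obtain G where g: "G \<in> \<gamma>" and si: "s \<in> impl G" using ltH_nodes[OF l] by blast
    have "le T x (zero G)" using l ltH_SI[OF xS g si] by simp
    then have "lt T x (zero G)" using nz g unfolding le_def by metis
    then have "lt H x (zero G)" using ltH_SS[OF xS zero_S[OF g]] by simp
    moreover have "lt H (zero G) s" using ltH_SI[OF zero_S[OF g] g si] unfolding le_def by simp
    ultimately show False using nb by blast
  qed
  have "lt T x s" using l ltH_SS[OF xS sS] by simp
  moreover have "\<not> (\<exists>v. lt T x v \<and> lt T v s)"
  proof
    assume "\<exists>v. lt T x v \<and> lt T v s"
    then obtain v where "lt T x v" "lt T v s" by blast
    then obtain v' where v': "v' \<in> S" "lt T x v'" "lt T v' s" using between_S[OF xS nz sS] by blast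
    then have "lt H x v'" "lt H v' s" using ltH_SS[OF xS v'(1)] ltH_SS[OF v'(1) sS] by simp+
    then show False using nb by blast
  qed
  ultimately show "s \<in> sons T x" unfolding sons_def by blast
next
  fix s assume "s \<in> sons T x"
  then have l: "lt T x s" and nb: "\<not> (\<exists>v. lt T x v \<and> lt T v s)" unfolding sons_def by blast+
  have sS: "s \<in> S" using sonsT_S[OF xS nz l nb] .
  have "lt H x s" using l ltH_SS[OF xS sS] by simp
  moreover have "\<not> (\<exists>v. lt H x v \<and> lt H v s)"
  proof
    assume "\<exists>v. lt H x v \<and> lt H v s"
    then obtain v where v: "lt H x v" "lt H v s" by blast
    show False
    proof (cases "v \<in> S")
      case True
      then show False using v ltH_SS[OF xS True] ltH_SS[OF True sS] nb by blast
    next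
      case False
      then obtain G where g: "G \<in> \<gamma>" and vi: "v \<in> impl G" using ltH_nodes[OF v(1)] by blast
      have "le T x (zero G)" using v(1) ltH_SI[OF xS g vi] by simp
      then have "lt T x (zero G)" using nz g unfolding le_def by metis
      moreover have "s \<in> down T (maxnodes G)" using v(2) ltH_IS[OF g vi sS] by simp
      then have "lt T (zero G) s" using down_zero_lt[OF g] by blast
      ultimately show False using nb by blast
    qed
  qed
  ultimately show "s \<in> sons H x" unfolding sons_def by blast
qed

lemma par_sym: "par A x y \<Longrightarrow> par A y x"
  unfolding par_def by blast

lemma leH_refl: "le H x x" unfolding le_def by simp

lemma parH_D: "par H x y \<Longrightarrow> \<not> lt H x y \<and> \<not> lt H y x \<and> x \<noteq> y"
  unfolding par_def le_def by blast

lemma pb_introT: "le H a x \<Longrightarrow> le H b y \<Longrightarrow> a \<in> S \<Longrightarrow> b \<in> S \<Longrightarrow> par T a b \<Longrightarrow> (\<exists>x' y'. le H x' x \<and> le H y' y \<and>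
             ((x' \<in> S \<and> y' \<in> S \<and> par T x' y')
              \<or> (\<exists>G \<in> \<gamma>. x' \<in> nodes G \<and> y' \<in> nodes G \<and> par G x' y')))"
  by (rule exI[of _ a], rule exI[of _ b], intro conjI, assumption, assumption, rule disjI1, simp)

lemma pb_introG: "le H a x \<Longrightarrow> le H b y \<Longrightarrow> G \<in> \<gamma> \<Longrightarrow> a \<in> nodes G \<Longrightarrow> b \<in> nodes G \<Longrightarrow> par G a b \<Longrightarrow> (\<exists>x' y'. le H x' x \<and> le H y' y \<and>
             ((x' \<in> S \<and> y' \<in> S \<and> par T x' y')
              \<or> (\<exists>G \<in> \<gamma>. x' \<in> nodes G \<and> y' \<in> nodes G \<and> par G x' y')))"
  by (rule exI[of _ a], rule exI[of _ b], intro conjI, assumption, assumption, rule disjI2, rule bexI[of _ G], simp_all)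

lemma pb_sym: "(\<exists>x' y'. le H x' x \<and> le H y' y \<and>
             ((x' \<in> S \<and> y' \<in> S \<and> par T x' y')
              \<or> (\<exists>G \<in> \<gamma>. x' \<in> nodes G \<and> y' \<in> nodes G \<and> par G x' y'))) \<Longrightarrow> (\<exists>x' y'. le H x' y \<and> le H y' x \<and>
             ((x' \<in> S \<and> y' \<in> S \<and> par T x' y')
              \<or> (\<exists>G \<in> \<gamma>. x' \<in> nodes G \<and> y' \<in> nodes G \<and> par G x' y')))"
proof -
  assume "(\<exists>x' y'. le H x' x \<and> le H y' y \<and>
             ((x' \<in> S \<and> y' \<in> S \<and> par T x' y')
              \<or> (\<exists>G \<in> \<gamma>. x' \<in> nodes G \<and> y' \<in> nodes G \<and> par G x' y')))"
  then obtain a b where ab: "le H a x" "le H b y" "(a \<in> S \<and> b \<in> S \<and> par T a b)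
              \<or> (\<exists>G \<in> \<gamma>. a \<in> nodes G \<and> b \<in> nodes G \<and> par G a b)" by blast
  from ab(3) show ?thesis
  proof (elim disjE conjE bexE)
    assume h: "a \<in> S" "b \<in> S" "par T a b"
    show ?thesis using pb_introT[OF ab(2) ab(1) h(2) h(1) par_sym[OF h(3)]] .
  next
    fix G assume h: "G \<in> \<gamma>" "a \<in> nodes G" "b \<in> nodes G" "par G a b"
    show ?thesis using pb_introG[OF ab(2) ab(1) h(1) h(3) h(2) par_sym[OF h(4)]] .
  qed
qed

lemma pb_impl: assumes g: "G \<in> \<gamma>" and xi: "x \<in> impl G" and p: "par H x y"
  shows "\<exists>x' y'. le H x' x \<and> le H y' y \<and>
             ((x' \<in> S \<and> y' \<in> S \<and> par T x' y')
              \<or> (\<exists>G \<in> \<gamma>. x' \<in> nodes G \<and> y' \<in> nodes G \<and> par G x' y'))"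
proof -
  have n1: "\<not> lt H x y" and n2: "\<not> lt H y x" and ne: "x \<noteq> y" using parH_D[OF p] by blast+
  have xn: "x \<in> nodes G" using impl_nodes[OF xi] .
  have yH: "y \<in> nodes H" using p unfolding par_def by blast
  have zS: "zero G \<in> S" using zero_S[OF g] .
  have xnT: "x \<notin> nodes T" using impl_notT[OF g xi] .
  from nodesH_cases[OF yH] show ?thesis
  proof (elim disjE bexE)
    assume yS: "y \<in> S"
    show ?thesis
    proof (cases "y \<in> down T (maxnodes G)")
      case True
      then obtain m where m: "m \<in> maxnodes G" "le T m y" "root T y (maxnodes G) = m"
        using down_root[OF g] by blast
      have "\<not> lt G x m" using n1 ltH_IS[OF g xi yS] True m(3) by simp
      moreover have "\<not> lt G m x" using m(1) by (simp add: max_G)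
      moreover have "x \<noteq> m" using xnT max_T[OF g m(1)] by metis
      moreover have "m \<in> nodes G" using m(1) by (simp add: max_G)
      ultimately have "par G x m" unfolding par_def le_def using xn by blast
      moreover have "le H m y"
        using m(2) ltH_SS[OF max_S[OF g m(1)] yS] unfolding le_def by blast
      ultimately show ?thesis using pb_introG[OF leH_refl _ g xn \<open>m \<in> nodes G\<close>] by blast
    next
      case False
      have yT: "y \<in> nodes T" using S_T[OF yS] .
      have "\<not> le T y (zero G)" using n2 ltH_SI[OF yS g xi] by simp
      moreover have "\<not> le T (zero G) y"
      proof
        assume "le T (zero G) y"
        moreover have "zero G \<noteq> y" using calculation \<open>\<not> le T y (zero G)\<close> unfolding le_def by metis
        ultimately have "lt T (zero G) y" unfolding le_def by blast
        then show False using False yS g unfolding S_iff by blast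
      qed
      ultimately have "par T (zero G) y" unfolding par_def using yT zero_T[OF g] by blast
      moreover have "le H (zero G) x" using ltH_SI[OF zS g xi] unfolding le_def by simp
      ultimately show ?thesis using pb_introT[OF _ leH_refl zS yS] by blast
    qed
  next
    fix E assume e: "E \<in> \<gamma>" and yi: "y \<in> impl E"
    show ?thesis
    proof (cases "E = G")
      case True
      then have yi': "y \<in> impl G" using yi by simp
      have "\<not> lt G x y" "\<not> lt G y x" using n1 n2 ltH_II[OF g xi yi'] ltH_II[OF g yi' xi] by simp+
      then have "par G x y" using ne xn impl_nodes[OF yi'] unfolding par_def le_def by blast
      then show ?thesis using pb_introG[OF leH_refl leH_refl g xn impl_nodes[OF yi']] by blast
    next
      case False
      then have ne': "G \<noteq> E" by simp
      have yn: "y \<in> nodes E" using impl_nodes[OF yi] .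
      have ynT: "y \<notin> nodes T" using impl_notT[OF e yi] .
      from consD[OF g e ne'] show ?thesis
      proof (elim disjE)
        assume "par T (zero G) (zero E)"
        moreover have "le H (zero G) x" using ltH_SI[OF zS g xi] unfolding le_def by simp
        moreover have "le H (zero E) y" using ltH_SI[OF zero_S[OF e] e yi] unfolding le_def by simp
        ultimately show ?thesis using pb_introT[OF _ _ zS zero_S[OF e]] by blast
      next
        assume d: "zero G \<in> down T (maxnodes E)"
        then obtain m where m: "m \<in> maxnodes E" "le T m (zero G)" "root T (zero G) (maxnodes E) = m"
          using down_root[OF e] by blast
        have "\<not> lt E y m" using n2 ltH_IID[OF e g ne'[symmetric] yi xi] d m(3) by simp
        moreover have "\<not> lt E m y" using m(1) by (simp add: max_G)
        moreover have "y \<noteq> m" using ynT max_T[OF e m(1)] by metis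
        moreover have mn: "m \<in> nodes E" using m(1) by (simp add: max_G)
        ultimately have "par E m y" unfolding par_def le_def using yn by blast
        moreover have "le H m x" using ltH_SI[OF max_S[OF e m(1)] g xi] m(2) unfolding le_def by simp
        ultimately show ?thesis using pb_introG[OF _ leH_refl e mn yn] by blast
      next
        assume d: "zero E \<in> down T (maxnodes G)"
        then obtain m where m: "m \<in> maxnodes G" "le T m (zero E)" "root T (zero E) (maxnodes G) = m"
          using down_root[OF g] by blast
        have "\<not> lt G x m" using n1 ltH_IID[OF g e ne' xi yi] d m(3) by simp
        moreover have "\<not> lt G m x" using m(1) by (simp add: max_G)
        moreover have "x \<noteq> m" using xnT max_T[OF g m(1)] by metis
        moreover have mn: "m \<in> nodes G" using m(1) by (simp add: max_G)
        ultimately have "par G x m" unfolding par_def le_def using xn by blast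
        moreover have "le H m y" using ltH_SI[OF max_S[OF g m(1)] e yi] m(2) unfolding le_def by simp
        ultimately show ?thesis using pb_introG[OF leH_refl _ g xn mn] by blast
      qed
    qed
  qed
qed

lemma partb: assumes p: "par H x y"
  shows "\<exists>x' y'. le H x' x \<and> le H y' y \<and>
             ((x' \<in> S \<and> y' \<in> S \<and> par T x' y')
              \<or> (\<exists>G \<in> \<gamma>. x' \<in> nodes G \<and> y' \<in> nodes G \<and> par G x' y'))"
proof -
  have xH: "x \<in> nodes H" and yH: "y \<in> nodes H" using p unfolding par_def by blast+
  show ?thesis
  proof (cases "x \<in> S")
    case xS: True
    show ?thesis
    proof (cases "y \<in> S")
      case yS: True
      have n1: "\<not> lt H x y" and n2: "\<not> lt H y x" and ne: "x \<noteq> y" using parH_D[OF p] by blast+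
      then have "par T x y" using ltH_SS[OF xS yS] ltH_SS[OF yS xS] S_T[OF xS] S_T[OF yS]
        unfolding par_def le_def by blast
      then show ?thesis using pb_introT[OF leH_refl leH_refl xS yS] by blast
    next
      case False
      then obtain G where g: "G \<in> \<gamma>" and "y \<in> impl G" using nodesH_cases[OF yH] by blast
      then show ?thesis using pb_impl[OF g _ par_sym[OF p]] pb_sym by blast
    qed
  next
    case False
    then obtain G where g: "G \<in> \<gamma>" and "x \<in> impl G" using nodesH_cases[OF xH] by blast
    then show ?thesis using pb_impl[OF g _ p] by blast
  qed
qed

lemma partc: assumes "\<exists>z. is_least T z"
  shows "(\<exists>z. is_least H z) \<and> zero H = zero T \<and> zero H \<in> S"
proof -
  obtain z where z: "is_least T z" using assms by blast
  have zT: "zero T = z" using least_unique[OF tree z] .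
  have zn: "z \<in> nodes T" and zle: "\<And>v. v \<in> nodes T \<Longrightarrow> le T z v" using z unfolding is_least_def by blast+
  have zS: "z \<in> S"
  proof -
    have "\<forall>G \<in> \<gamma>. lt T (zero G) z \<longrightarrow> z \<in> down T (maxnodes G)"
    proof (intro ballI impI)
      fix G assume g: "G \<in> \<gamma>" and l: "lt T (zero G) z"
      have "le T z (zero G)" using zle zero_T[OF g] by blast
      then have "lt T (zero G) (zero G)" using l lt_le_trans by blast
      then show "z \<in> down T (maxnodes G)" using T_irr by blast
    qed
    then show ?thesis unfolding S_iff using zn by blast
  qed
  have lH: "is_least H z"
    unfolding is_least_def
  proof (intro conjI ballI)
    show "z \<in> nodes H" using zS nodesH by blast
  next
    fix v assume "v \<in> nodes H"
    from nodesH_cases[OF this] show "le H z v"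
    proof (elim disjE bexE)
      assume vS: "v \<in> S"
      then show ?thesis using zle[OF S_T[OF vS]] ltH_SS[OF zS vS] unfolding le_def by blast
    next
      fix G assume g: "G \<in> \<gamma>" and vi: "v \<in> impl G"
      then show ?thesis using zle[OF zero_T[OF g]] ltH_SI[OF zS g vi] unfolding le_def by blast
    qed
  qed
  have "zero H = z" unfolding zero_def
  proof (rule the_equality)
    show "is_least H z" using lH .
  next
    fix z' assume l': "is_least H z'"
    then have "le H z' z" using zS nodesH unfolding is_least_def by blast
    moreover have "\<not> lt H z' z"
    proof
      assume l: "lt H z' z"
      from ltH_nodes[OF l] have "z' \<in> S \<or> (\<exists>G \<in> \<gamma>. z' \<in> impl G)" by blast
      then show False
      proof (elim disjE bexE)
        assume zS': "z' \<in> S"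
        then have "lt T z' z" using l ltH_SS[OF zS' zS] by simp
        moreover have "le T z z'" using zle[OF S_T[OF zS']] .
        ultimately show False using le_lt_trans T_irr by blast
      next
        fix G assume g: "G \<in> \<gamma>" and zi: "z' \<in> impl G"
        then have "z \<in> down T (maxnodes G)" using l ltH_IS[OF g zi zS] by simp
        then have "lt T (zero G) z" using down_zero_lt[OF g] by blast
        moreover have "le T z (zero G)" using zle[OF zero_T[OF g]] .
        ultimately show False using lt_le_trans T_irr by blast
      qed
    qed
    ultimately show "z' = z" unfolding le_def by blast
  qed
  then show ?thesis using lH zT zS by auto
qed

lemma zero_succ: assumes g: "G \<in> \<gamma>" shows "\<exists>v. lt H (zero G) v \<and> lt G (zero G) v"
proof -
  obtain a b where ab: "a \<in> nodes G" "b \<in> nodes G" "a \<noteq> b" using G_two[OF g] by blast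
  then obtain v where v: "v \<in> nodes G" "v \<noteq> zero G" by metis
  then have "lt G (zero G) v" using fz[OF g] by blast
  moreover then have "lt H (zero G) v" using ltH_G[OF g G_zero_nodes[OF g] v(1)] by blast
  ultimately show ?thesis by blast
qed

lemma impl_succ: assumes g: "G \<in> \<gamma>" and xi: "x \<in> impl G" shows "\<exists>v. lt H x v"
proof -
  have "x \<notin> maxnodes G" "x \<in> nodes G" using xi by (simp_all add: impl_iff)
  then obtain v where v: "lt G x v" unfolding maxnodes_def by blast
  then have "v \<in> nodes G" using tree_nodes[OF G_tree[OF g]] by blast
  then show ?thesis using v ltH_G[OF g impl_nodes[OF xi]] by blast
qed

lemma partd: assumes "maxnodes T = {}" shows "maxnodes H = {}"
proof -
  have "\<exists>y. lt H x y" if xH: "x \<in> nodes H" for x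
  proof -
    from nodesH_cases[OF xH] show ?thesis
    proof (elim disjE bexE)
      fix G assume "G \<in> \<gamma>" "x \<in> impl G" then show ?thesis using impl_succ by blast
    next
      assume xS: "x \<in> S"
      show ?thesis
      proof (cases "\<exists>G \<in> \<gamma>. x = zero G")
        case True then show ?thesis using zero_succ by blast
      next
        case False
        have "x \<in> nodes T" using S_T[OF xS] .
        then obtain y where y: "lt T x y" using assms unfolding maxnodes_def by blast
        show ?thesis
        proof (cases "y \<in> S")
          case True then show ?thesis using y ltH_SS[OF xS True] by blast
        next
          case yn: False
          have "y \<in> nodes T" using tree_nodes[OF tree y] by blast
          with yn obtain G where g: "G \<in> \<gamma>" and zy: "lt T (zero G) y" and yd: "y \<notin> down T (maxnodes G)"
            unfolding S_iff by blast
          have "zero G = x \<or> lt T (zero G) x \<or> lt T x (zero G)" using tree_lin[OF tree zy y] .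
          then show ?thesis
          proof (elim disjE)
            assume "zero G = x" then show ?thesis using False g by metis
          next
            assume "lt T (zero G) x"
            then have "x \<in> down T (maxnodes G)" using xS g unfolding S_iff by blast
            then have "y \<in> down T (maxnodes G)" using y unfolding down_def le_def using tree_trans[OF tree] by blast
            then show ?thesis using yd by blast
          next
            assume "lt T x (zero G)"
            then show ?thesis using ltH_SS[OF xS zero_S[OF g]] by blast
          qed
        qed
      qed
    qed
  qed
  then show ?thesis unfolding maxnodes_def by blast
qed

lemma parte: assumes bT: "branching T K" and bG: "\<forall>G \<in> \<gamma>. branching G K" shows "branching H K"
  unfolding branching_def
proof
  fix x assume "x \<in> nodes H - maxnodes H"
  then have xH: "x \<in> nodes H" and xs: "\<exists>y. lt H x y" unfolding maxnodes_def by blast+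
  from nodesH_cases[OF xH] show "sons H x \<approx> K"
  proof (elim disjE bexE)
    fix G assume g: "G \<in> \<gamma>" and xi: "x \<in> impl G"
    have "x \<in> nodes G - maxnodes G" using xi by (simp add: impl_iff)
    then have "sons G x \<approx> K" using bG g unfolding branching_def by blast
    moreover have "sons H x = sons G x" using sons_G[OF g] xi by blast
    ultimately show ?thesis by simp
  next
    assume xS: "x \<in> S"
    show ?thesis
    proof (cases "\<exists>G \<in> \<gamma>. x = zero G")
      case True
      then obtain G where g: "G \<in> \<gamma>" and x0: "x = zero G" by blast
      obtain v where "lt G (zero G) v" using zero_succ[OF g] by blast
      then have "zero G \<in> nodes G - maxnodes G" using G_zero_nodes[OF g] unfolding maxnodes_def by blast
      then have "sons G (zero G) \<approx> K" using bG g unfolding branching_def by blast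
      moreover have "sons H (zero G) = sons G (zero G)" using sons_G[OF g] by blast
      ultimately show ?thesis using x0 by simp
    next
      case False
      then have nz: "\<forall>G \<in> \<gamma>. x \<noteq> zero G" by blast
      obtain y where l: "lt H x y" using xs by blast
      have "\<exists>y. lt T x y"
      proof -
        from ltH_nodes[OF l] have "y \<in> S \<or> (\<exists>G \<in> \<gamma>. y \<in> impl G)" by blast
        then show ?thesis
        proof (elim disjE bexE)
          assume yS: "y \<in> S" then show ?thesis using l ltH_SS[OF xS yS] by blast
        next
          fix G assume g: "G \<in> \<gamma>" and yi: "y \<in> impl G"
          then have "le T x (zero G)" using l ltH_SI[OF xS g yi] by simp
          then have "lt T x (zero G)" using nz g unfolding le_def by metis
          then show ?thesis by blast
        qed
      qed
      then have "x \<in> nodes T - maxnodes T" using S_T[OF xS] unfolding maxnodes_def by blast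
      then show ?thesis using bT sons_T[OF xS nz] unfolding branching_def by simp
    qed
  qed
qed

lemma preds_fin: "G \<in> \<gamma> \<Longrightarrow> height_le_omega G \<Longrightarrow> finite (preds G r)"
proof (cases "r \<in> nodes G")
  case True
  assume "height_le_omega G" then show ?thesis using True unfolding height_le_omega_def by blast
next
  case False
  assume g: "G \<in> \<gamma>"
  have "preds G r = {}" using False tree_nodes[OF G_tree[OF g]] unfolding preds_def by blast
  then show ?thesis by simp
qed

lemma fin_family: assumes hG: "\<forall>G \<in> \<gamma>. height_le_omega G" and F: "finite F"
  shows "finite (\<Union>G \<in> {G \<in> \<gamma>. zero G \<in> F}. preds G (f G))"
proof -
  have "inj_on zero \<gamma>" using zero_inj unfolding inj_on_def by blast
  then have "finite (zero -` F \<inter> \<gamma>)" using finite_vimage_IntI[OF F] by blast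
  moreover have "zero -` F \<inter> \<gamma> = {G \<in> \<gamma>. zero G \<in> F}" by blast
  ultimately have "finite {G \<in> \<gamma>. zero G \<in> F}" by simp
  then show ?thesis using preds_fin hG by blast
qed

lemma partf: assumes hT: "height_le_omega T" and hG: "\<forall>G \<in> \<gamma>. height_le_omega G"
  shows "height_le_omega H"
  unfolding height_le_omega_def
proof
  fix x assume xH: "x \<in> nodes H"
  have fT: "finite (preds T v)" if "v \<in> nodes T" for v using hT that unfolding height_le_omega_def by blast
  from nodesH_cases[OF xH] show "finite (preds H x)"
  proof (elim disjE bexE)
    assume xS: "x \<in> S"
    let ?U = "\<Union>G \<in> {G \<in> \<gamma>. zero G \<in> preds T x}. preds G (root T x (maxnodes G))"
    have "preds H x \<subseteq> preds T x \<union> ?U"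
    proof
      fix v assume "v \<in> preds H x"
      then have l: "lt H v x" unfolding preds_def by blast
      from ltH_nodes[OF l] have "v \<in> S \<or> (\<exists>G \<in> \<gamma>. v \<in> impl G)" by blast
      then show "v \<in> preds T x \<union> ?U"
      proof (elim disjE bexE)
        assume vS: "v \<in> S" then show ?thesis using l ltH_SS[OF vS xS] unfolding preds_def by blast
      next
        fix G assume g: "G \<in> \<gamma>" and vi: "v \<in> impl G"
        then have "x \<in> down T (maxnodes G)" and "lt G v (root T x (maxnodes G))"
          using l ltH_IS[OF g vi xS] by simp+
        then have "zero G \<in> preds T x" "v \<in> preds G (root T x (maxnodes G))"
          using down_zero_lt[OF g] unfolding preds_def by blast+
        then show ?thesis using g by blast
      qed
    qed
    moreover have "finite (preds T x \<union> ?U)"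
      using fT[OF S_T[OF xS]] fin_family[OF hG fT[OF S_T[OF xS]], where f="\<lambda>G. root T x (maxnodes G)"] by simp
    ultimately show ?thesis using finite_subset by blast
  next
    fix G assume g: "G \<in> \<gamma>" and xi: "x \<in> impl G"
    let ?U = "\<Union>D \<in> {D \<in> \<gamma>. zero D \<in> preds T (zero G)}. preds D (root T (zero G) (maxnodes D))"
    have "preds H x \<subseteq> insert (zero G) (preds T (zero G)) \<union> preds G x \<union> ?U"
    proof
      fix v assume "v \<in> preds H x"
      then have l: "lt H v x" unfolding preds_def by blast
      from ltH_nodes[OF l] have "v \<in> S \<or> (\<exists>D \<in> \<gamma>. v \<in> impl D)" by blast
      then show "v \<in> insert (zero G) (preds T (zero G)) \<union> preds G x \<union> ?U"
      proof (elim disjE bexE)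
        assume vS: "v \<in> S" then show ?thesis using l ltH_SI[OF vS g xi] unfolding preds_def le_def by blast
      next
        fix D assume d: "D \<in> \<gamma>" and vi: "v \<in> impl D"
        show ?thesis
        proof (cases "D = G")
          case True
          have vi': "v \<in> impl G" using vi True by simp
          then show ?thesis using l ltH_II[OF g vi' xi] unfolding preds_def by blast
        next
          case False
          then have "zero G \<in> down T (maxnodes D)" and "lt D v (root T (zero G) (maxnodes D))"
            using l ltH_IID[OF d g False vi xi] by simp+
          then have "zero D \<in> preds T (zero G)" "v \<in> preds D (root T (zero G) (maxnodes D))"
            using down_zero_lt[OF d] unfolding preds_def by blast+
          then show ?thesis using d by blast
        qed
      qed
    qed
    moreover have "finite (insert (zero G) (preds T (zero G)) \<union> preds G x \<union> ?U)"
      using fT[OF zero_T[OF g]] fin_family[OF hG fT[OF zero_T[OF g]], where f="\<lambda>D. root T (zero G) (maxnodes D)"]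
        preds_fin[OF g] hG g by simp
    ultimately show ?thesis using finite_subset by blast
  qed
qed

end


theorem mainTheorem8:
  fixes T :: "'a tree" and \<gamma> :: "'a tree set" and K :: "'k set"
  assumes "is_tree T" and "consistent T \<gamma>"
  defines "H \<equiv> hybr T \<gamma>"
  shows "(\<forall>x \<in> nodes H.
            (\<forall>G \<in> \<gamma>. (x = zero G \<or> x \<in> impl G) \<longrightarrow> sons H x = sons G x)
          \<and> ((\<forall>G \<in> \<gamma>. x \<noteq> zero G \<and> x \<notin> impl G) \<longrightarrow> sons H x = sons T x))
     \<and> (\<forall>x y. par H x y \<longrightarrow>
          (\<exists>x' y'. le H x' x \<and> le H y' y \<and>
             ((x' \<in> supp T \<gamma> \<and> y' \<in> supp T \<gamma> \<and> par T x' y')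
              \<or> (\<exists>G \<in> \<gamma>. x' \<in> nodes G \<and> y' \<in> nodes G \<and> par G x' y'))))
     \<and> ((\<exists>z. is_least T z) \<longrightarrow>
          (\<exists>z. is_least H z) \<and> zero H = zero T \<and> zero H \<in> supp T \<gamma>)
     \<and> (maxnodes T = {} \<longrightarrow> maxnodes H = {})
     \<and> (branching T K \<and> (\<forall>G \<in> \<gamma>. branching G K) \<longrightarrow> branching H K)
     \<and> (height_le_omega T \<and> (\<forall>G \<in> \<gamma>. height_le_omega G) \<longrightarrow> height_le_omega H)"
proof -
  interpret hyb T \<gamma> by (rule hyb.intro) (rule assms(1), rule assms(2))
  have a: "\<forall>x \<in> nodes (hybr T \<gamma>).
            (\<forall>G \<in> \<gamma>. (x = zero G \<or> x \<in> impl G) \<longrightarrow> sons (hybr T \<gamma>) x = sons G x)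
          \<and> ((\<forall>G \<in> \<gamma>. x \<noteq> zero G \<and> x \<notin> impl G) \<longrightarrow> sons (hybr T \<gamma>) x = sons T x)"
  proof (intro ballI conjI impI)
    fix x G assume "G \<in> \<gamma>" "x = zero G \<or> x \<in> impl G"
    then show "sons (hybr T \<gamma>) x = sons G x" using sons_G by blast
  next
    fix x assume xH: "x \<in> nodes (hybr T \<gamma>)" and nz: "\<forall>G \<in> \<gamma>. x \<noteq> zero G \<and> x \<notin> impl G"
    then have xS: "x \<in> supp T \<gamma>" using nodesH_cases by blast
    have "\<forall>G \<in> \<gamma>. x \<noteq> zero G" using nz by blast
    then show "sons (hybr T \<gamma>) x = sons T x" using sons_T[OF xS] by blast
  qed
  show ?thesis unfolding H_def
  proof (intro conjI)
    show "\<forall>x y. par (hybr T \<gamma>) x y \<longrightarrow>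
          (\<exists>x' y'. le (hybr T \<gamma>) x' x \<and> le (hybr T \<gamma>) y' y \<and>
             ((x' \<in> supp T \<gamma> \<and> y' \<in> supp T \<gamma> \<and> par T x' y')
              \<or> (\<exists>G \<in> \<gamma>. x' \<in> nodes G \<and> y' \<in> nodes G \<and> par G x' y')))"
      using partb by blast
    show "(\<exists>z. is_least T z) \<longrightarrow>
          (\<exists>z. is_least (hybr T \<gamma>) z) \<and> zero (hybr T \<gamma>) = zero T \<and> zero (hybr T \<gamma>) \<in> supp T \<gamma>"
      using partc by blast
  qed (use a in \<open>simp_all add: partc partd parte partf\<close>)
qed

end
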